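(* Let $\beta\ge1$ and suppose there are at least two distinct alternate Lyndon words over a finite alphabet $\mathcal{A}$ attached to $\beta$. Then there exists a weak (i.e. periodic) alternate Lyndon word attached to $\beta$.
   Context: Alternate order: for two words $x=x_1x_2\cdots$, $y=y_1y_2\cdots$ over a finite alphabet of integers, $x\prec y$ iff there is $k$ with $x_i=y_i$ for all $i<k$ and $(-1)^k(x_k-y_k)<0$; $x\preceq y$ iff $x=y$ or $x\prec y$. An alternate Lyndon word is an infinite word $(d_i)_{i\ge1}$ with $d_1d_2\cdots\preceq d_nd_{n+1}\cdots$ for all $n\ge1$; it is weak if equality $d_1d_2\cdots=d_nd_{n+1}\cdots$ holds for some $n>1$ (equivalently, it is purely periodic). Its alternate Lyndon system is the set of infinite words $x$ with $d_1d_2\cdots\preceq x_kx_{k+1}\cdots$ for all $k\ge1$, and its entropy is $\lim_n\frac1n\log H_n$ with $H_n$ the number of words of length $n$ occurring as finite factors of elements of the system. An alternate Lyndon word is attached (associated) to $\beta$ if its alternate Lyndon system has entropy $\log\beta$. *)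

theory Defs
  imports Complex_Main
begin

(* Infinite words x = x_1 x_2 ... are modelled as functions nat => int,
   0-indexed: x 0 = x_1, x k = x_(k+1). *)

(* alternate order: x < y iff first difference at (1-based) position k with
   (-1)^k (x_k - y_k) < 0; 0-based position k corresponds to 1-based k+1. *)
definition alt_less :: "(nat \<Rightarrow> int) \<Rightarrow> (nat \<Rightarrow> int) \<Rightarrow> bool" where
  "alt_less x y \<longleftrightarrow>
     (\<exists>k. (\<forall>i<k. x i = y i) \<and> (-1::int) ^ (k + 1) * (x k - y k) < 0)"

definition alt_le :: "(nat \<Rightarrow> int) \<Rightarrow> (nat \<Rightarrow> int) \<Rightarrow> bool" where
  "alt_le x y \<longleftrightarrow> x = y \<or> alt_less x y"

definition sfx :: "(nat \<Rightarrow> int) \<Rightarrow> nat \<Rightarrow> (nat \<Rightarrow> int)" where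
  "sfx x n = (\<lambda>i. x (n + i))"

definition alt_lyndon :: "int set \<Rightarrow> (nat \<Rightarrow> int) \<Rightarrow> bool" where
  "alt_lyndon A d \<longleftrightarrow> (\<forall>i. d i \<in> A) \<and> (\<forall>n. alt_le d (sfx d n))"

(* weak: d_1 d_2 ... = d_n d_(n+1) ... for some n > 1 *)
definition weak_word :: "(nat \<Rightarrow> int) \<Rightarrow> bool" where
  "weak_word d \<longleftrightarrow> (\<exists>n>0. sfx d n = d)"

definition alt_lyndon_system :: "int set \<Rightarrow> (nat \<Rightarrow> int) \<Rightarrow> (nat \<Rightarrow> int) set" where
  "alt_lyndon_system A d = {x. (\<forall>i. x i \<in> A) \<and> (\<forall>k. alt_le d (sfx x k))}"

definition factors :: "(nat \<Rightarrow> int) set \<Rightarrow> nat \<Rightarrow> int list set" where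
  "factors S n = {map (\<lambda>i. x (k + i)) [0..<n] | x k. x \<in> S}"

definition attached :: "int set \<Rightarrow> real \<Rightarrow> (nat \<Rightarrow> int) \<Rightarrow> bool" where
  "attached A \<beta> d \<longleftrightarrow>
     (\<lambda>n. ln (real (card (factors (alt_lyndon_system A d) n))) / real n) \<longlonglongrightarrow> ln \<beta>"

end

theory Submission
  imports Defs
begin

definition diff_at :: "(nat \<Rightarrow> int) \<Rightarrow> (nat \<Rightarrow> int) \<Rightarrow> nat \<Rightarrow> bool" where
  "diff_at x y k \<longleftrightarrow> (\<forall>i<k. x i = y i) \<and> (-1::int) ^ (k + 1) * (x k - y k) < 0"

lemma alt_less_diff: "alt_less x y \<longleftrightarrow> (\<exists>k. diff_at x y k)"
  unfolding alt_less_def diff_at_def by simp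

lemma diff_at_irrefl: "\<not> diff_at x x k"
  unfolding diff_at_def by simp

lemma diff_at_asym:
  assumes a: "diff_at x y k" and b: "diff_at y x k'"
  shows False
proof -
  consider "k < k'" | "k' < k" | "k = k'" by linarith
  then show False
  proof cases
    case 1
    then have "y k = x k" using b unfolding diff_at_def by auto
    then show False using a unfolding diff_at_def by simp
  next
    case 2
    then have "x k' = y k'" using a unfolding diff_at_def by auto
    then show False using b unfolding diff_at_def by simp
  next
    case 3
    have e: "(-1::int)^(k+1)*(y k - x k) = - ((-1)^(k+1)*(x k - y k))"
      by (simp add: algebra_simps)
    have "(-1::int)^(k+1)*(y k - x k) < 0" using b 3 unfolding diff_at_def by simp
    moreover have "(-1::int)^(k+1)*(x k - y k) < 0" using a unfolding diff_at_def by simp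
    ultimately show False using e by linarith
  qed
qed

lemma diff_at_trans:
  assumes a: "diff_at x y k1" and b: "diff_at y z k2"
  shows "\<exists>k. diff_at x z k"
proof -
  consider "k1 < k2" | "k2 < k1" | "k1 = k2" by linarith
  then show ?thesis
  proof cases
    case 1
    have "diff_at x z k1" using a b 1 unfolding diff_at_def by auto
    then show ?thesis by blast
  next
    case 2
    have "diff_at x z k2" using a b 2 unfolding diff_at_def by auto
    then show ?thesis by blast
  next
    case 3
    have e: "(-1::int)^(k1+1)*(x k1 - z k1) = (-1)^(k1+1)*(x k1 - y k1) + (-1)^(k1+1)*(y k1 - z k1)"
      by (simp add: algebra_simps)
    have "diff_at x z k1" using a b 3 e unfolding diff_at_def by auto
    then show ?thesis by blast
  qed
qed

lemma alt_less_trans: "alt_less x y \<Longrightarrow> alt_less y z \<Longrightarrow> alt_less x z"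
  using diff_at_trans alt_less_diff by metis

lemma alt_le_trans: "alt_le x y \<Longrightarrow> alt_le y z \<Longrightarrow> alt_le x z"
  unfolding alt_le_def using alt_less_trans by blast

lemma alt_total:
  assumes "x \<noteq> y"
  shows "alt_less x y \<or> alt_less y x"
proof -
  have ex: "\<exists>i. x i \<noteq> y i" using assms by auto
  define k where "k = (LEAST i. x i \<noteq> y i)"
  have nk: "x k \<noteq> y k" unfolding k_def using LeastI_ex[OF ex] .
  have lt: "\<forall>i<k. x i = y i" unfolding k_def using not_less_Least by blast
  have s: "(-1::int)^(k+1) = 1 \<or> (-1::int)^(k+1) = -1"
    by (cases "even (k+1)") auto
  have "(-1::int)^(k+1)*(x k - y k) < 0 \<or> (-1::int)^(k+1)*(y k - x k) < 0"
    using s nk by auto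
  then show ?thesis unfolding alt_less_def using lt by metis
qed

lemma le_no_diff:
  assumes "alt_le d y"
  shows "\<not> diff_at y d p"
  using assms diff_at_irrefl diff_at_asym unfolding alt_le_def alt_less_diff by metis

lemma core:
  assumes F1: "\<forall>j. alt_le d1 (sfx d1 j)" and F2: "\<forall>j. alt_le d2 (sfx d2 j)"
    and dk: "diff_at d1 d2 k"
    and nev: "even n" and kn: "k < n" and nk: "n \<le> k + 2"
    and xdef: "x = (\<lambda>i. d2 (i mod n))"
  shows "(\<forall>j. alt_le x (sfx x j)) \<and> alt_le x d2 \<and> alt_less d1 x \<and> sfx x n = x"
proof -
  have npos: "n > 0" using kn by simp
  have per: "\<And>i. x (n + i) = x i" unfolding xdef by simp
  have xlow: "\<And>i. i < n \<Longrightarrow> x i = d2 i" unfolding xdef by simp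
  have noshift: "\<forall>m. 1 \<le> m \<longrightarrow> m < n \<longrightarrow> \<not> diff_at (sfx x m) x p" for p
  proof (induction p rule: less_induct)
    case (less p)
    show ?case
    proof (intro allI impI notI)
      fix m assume m1: "1 \<le> m" and mn: "m < n" and D: "diff_at (sfx x m) x p"
      have agr: "\<And>i. i < p \<Longrightarrow> x (m + i) = x i" using D unfolding diff_at_def sfx_def by auto
      have sg: "(-1::int)^(p+1) * (x (m + p) - x p) < 0" using D unfolding diff_at_def sfx_def by auto
      show False
      proof (cases "p < n - m")
        case True
        have "diff_at (sfx d2 m) d2 p"
          unfolding diff_at_def sfx_def
        proof (intro conjI allI impI)
          fix i assume "i < p"
          then show "d2 (m + i) = d2 i" using agr[of i] xlow True by (metis add_lessD1 less_diff_conv add.commute less_trans)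
        next
          show "(-1::int)^(p+1) * (d2 (m + p) - d2 p) < 0"
            using sg xlow[of "m+p"] xlow[of p] True by simp
        qed
        then show False using le_no_diff F2 by blast
      next
        case False
        then have pge: "n - m \<le> p" by simp
        have border: "\<And>i. i < n - m \<Longrightarrow> d2 (m + i) = d2 i"
        proof -
          fix i assume "i < n - m"
          then have "m + i < n" "i < n" "i < p" using pge by auto
          then show "d2 (m + i) = d2 i" using agr xlow by metis
        qed
        show False
        proof (cases "even m")
          case True
          have mk: "m \<le> k" using True nev mn nk m1 by (auto elim!: evenE) 
          have "diff_at (sfx d1 m) d1 (k - m)"
            unfolding diff_at_def sfx_def
          proof (intro conjI allI impI)
            fix i assume il: "i < k - m"
            have "d1 (m + i) = d2 (m + i)" using dk il unfolding diff_at_def by auto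
            also have "\<dots> = d2 i" using border il kn by auto
            also have "\<dots> = d1 i" using dk il unfolding diff_at_def by auto
            finally show "d1 (m + i) = d1 i" .
          next
            have e1: "m + (k - m) = k" using mk by simp
            have e2: "d1 (k - m) = d2 k"
            proof -
              have "d1 (k - m) = d2 (k - m)" using dk m1 mk unfolding diff_at_def by auto
              also have "\<dots> = d2 (m + (k - m))" using border[of "k-m"] kn mk by auto
              finally show ?thesis using e1 by simp
            qed
            have e3: "(-1::int)^(k+1) = (-1)^(k - m + 1)"
            proof -
              have "k + 1 = (k - m + 1) + m" using mk by simp
              then have "(-1::int)^(k+1) = (-1)^(k-m+1) * (-1)^m" by (metis power_add)
              then show ?thesis using True by simp
            qed
            show "(-1::int)^(k - m + 1) * (d1 (m + (k - m)) - d1 (k - m)) < 0"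
              using dk e1 e2 e3 unfolding diff_at_def by simp
          qed
          then show False using le_no_diff F1 by blast
        next
          case odd: False
          define t where "t = n - m"
          have t1: "1 \<le> t" "t < n" using mn m1 unfolding t_def by auto
          have todd: "odd t" using odd nev mn unfolding t_def by simp
          have lt: "p - t < p" using t1 pge unfolding t_def by simp
          have "diff_at (sfx x t) x (p - t)"
            unfolding diff_at_def sfx_def
          proof (intro conjI allI impI)
            fix i assume il: "i < p - t"
            then have "t + i < p" by simp
            then have "x (m + (t + i)) = x (t + i)" using agr by simp
            moreover have "m + (t + i) = n + i" using mn unfolding t_def by simp
            ultimately show "x (t + i) = x i" using per by metis
          next
            have e1: "m + p = n + (p - t)" using pge mn unfolding t_def by simp
            have e2: "t + (p - t) = p" using pge unfolding t_def by simp
            have e3: "(-1::int)^(p+1) = - ((-1)^(p - t + 1))"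
            proof -
              have "p + 1 = (p - t + 1) + t" using pge unfolding t_def by simp
              then have "(-1::int)^(p+1) = (-1)^(p-t+1) * (-1)^t" by (metis power_add)
              then show ?thesis using todd by simp
            qed
            have "(-1::int)^(p+1) * (x (p - t) - x p) < 0" using sg e1 per by metis
            moreover have "(-1::int)^(p-t+1) * (x p - x (p-t)) = (-1)^(p+1) * (x (p-t) - x p)"
              using e3 by (simp add: algebra_simps)
            ultimately show "(-1::int)^(p - t + 1) * (x (t + (p - t)) - x (p - t)) < 0"
              using e2 by simp
          qed
          then show False using less.IH[OF lt] t1 by blast
        qed
      qed
    qed
  qed
  have sfxmod: "sfx x j = sfx x (j mod n)" for j
    unfolding sfx_def xdef by (rule ext) (simp add: mod_add_left_eq)
  have lyn: "\<forall>j. alt_le x (sfx x j)"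
  proof
    fix j
    show "alt_le x (sfx x j)"
    proof (cases "j mod n = 0")
      case True
      then show ?thesis unfolding alt_le_def using sfxmod[of j] by (simp add: sfx_def)
    next
      case False
      have "1 \<le> j mod n" "j mod n < n" using False npos by auto
      then have "\<not> diff_at (sfx x (j mod n)) x p" for p using noshift by blast
      then show ?thesis using alt_total[of x "sfx x j"] sfxmod[of j]
        unfolding alt_le_def alt_less_diff by metis
    qed
  qed
  have nd: "\<not> diff_at d2 x j" for j
  proof
    assume D: "diff_at d2 x j"
    have agr: "\<And>i. i < j \<Longrightarrow> d2 i = x i" using D unfolding diff_at_def by auto
    have sg: "(-1::int)^(j+1) * (d2 j - x j) < 0" using D unfolding diff_at_def by auto
    have jn: "n \<le> j"
    proof (rule ccontr)
      assume "\<not> n \<le> j"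
      then show False using sg xlow[of j] by simp
    qed
    define r where "r = j mod n"
    define s where "s = n * (j div n)"
    have js: "j = s + r" unfolding r_def s_def by simp
    have rn: "r < n" unfolding r_def using npos by simp
    have sev: "even s" unfolding s_def using nev by simp
    have "diff_at (sfx d2 s) d2 r"
      unfolding diff_at_def sfx_def
    proof (intro conjI allI impI)
      fix i assume il: "i < r"
      have "d2 (s + i) = x (s + i)" using agr il js by simp
      also have "\<dots> = d2 ((s + i) mod n)" unfolding xdef by simp
      also have "(s + i) mod n = i" unfolding s_def using il rn by simp
      finally show "d2 (s + i) = d2 i" .
    next
      have xj: "x j = d2 r" unfolding xdef r_def by simp
      have e3: "(-1::int)^(j+1) = (-1)^(r + 1)"
      proof -
        have "j + 1 = (r + 1) + s" using js by simp
        then have "(-1::int)^(j+1) = (-1)^(r+1) * (-1)^s" by (metis power_add)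
        then show ?thesis using sev by simp
      qed
      show "(-1::int)^(r+1) * (d2 (s + r) - d2 r) < 0"
        using sg xj e3 js by simp
    qed
    then show False using le_no_diff F2 by blast
  qed
  have le2: "alt_le x d2"
    using alt_total[of x d2] nd unfolding alt_le_def alt_less_diff by blast
  have "diff_at d1 x k"
    using dk xlow kn unfolding diff_at_def by auto
  then have l1: "alt_less d1 x" unfolding alt_less_diff by blast
  have "sfx x n = x" unfolding sfx_def using per by auto
  then show ?thesis using lyn le2 l1 by blast
qed


lemma sys_mono: "alt_le a b \<Longrightarrow> alt_lyndon_system A b \<subseteq> alt_lyndon_system A a"
  unfolding alt_lyndon_system_def using alt_le_trans by blast

lemma factors_mono: "S \<subseteq> T \<Longrightarrow> factors S n \<subseteq> factors T n"
  unfolding factors_def by blast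

lemma factors_finite:
  assumes "finite A"
  shows "finite (factors (alt_lyndon_system A d) n)"
proof -
  have "factors (alt_lyndon_system A d) n \<subseteq> {xs. set xs \<subseteq> A \<and> length xs = n}"
    unfolding factors_def alt_lyndon_system_def by auto
  moreover have "finite {xs. set xs \<subseteq> A \<and> length xs = n}"
    using finite_lists_length_eq[OF assms] .
  ultimately show ?thesis by (rule finite_subset)
qed

lemma lyndon_in_sys: "alt_lyndon A d \<Longrightarrow> d \<in> alt_lyndon_system A d"
  unfolding alt_lyndon_def alt_lyndon_system_def by blast

lemma factors_ne: "y \<in> S \<Longrightarrow> factors S n \<noteq> {}"
  unfolding factors_def by blast

lemma ordered_case:
  fixes A :: "int set" and \<beta> :: real
  assumes fA: "finite A"
    and L1: "alt_lyndon A d1" and a1: "attached A \<beta> d1"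
    and L2: "alt_lyndon A d2" and a2: "attached A \<beta> d2"
    and lt: "alt_less d1 d2"
  shows "\<exists>d. alt_lyndon A d \<and> weak_word d \<and> attached A \<beta> d"
proof -
  obtain k where dk: "diff_at d1 d2 k" using lt unfolding alt_less_diff by blast
  define n where "n = (if even (k+1) then k+1 else k+2)"
  have nev: "even n" "k < n" "n \<le> k + 2" unfolding n_def by auto
  define x where "x = (\<lambda>i. d2 (i mod n))"
  have F1: "\<forall>j. alt_le d1 (sfx d1 j)" using L1 unfolding alt_lyndon_def by blast
  have F2: "\<forall>j. alt_le d2 (sfx d2 j)" using L2 unfolding alt_lyndon_def by blast
  have C: "(\<forall>j. alt_le x (sfx x j)) \<and> alt_le x d2 \<and> alt_less d1 x \<and> sfx x n = x"
    using core[OF F1 F2 dk nev x_def] .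
  have xA: "\<forall>i. x i \<in> A" using L2 unfolding alt_lyndon_def x_def by blast
  have Lx: "alt_lyndon A x" unfolding alt_lyndon_def using xA C by blast
  have Wx: "weak_word x" unfolding weak_word_def using C nev(2) by (intro exI[of _ n]) auto
  have s2: "alt_lyndon_system A d2 \<subseteq> alt_lyndon_system A x" using sys_mono C by blast
  have s1: "alt_lyndon_system A x \<subseteq> alt_lyndon_system A d1"
    using sys_mono C unfolding alt_le_def by blast
  let ?f = "\<lambda>d m. ln (real (card (factors (alt_lyndon_system A d) m))) / real m"
  have bnd: "?f d2 m \<le> ?f x m \<and> ?f x m \<le> ?f d1 m" for m
  proof -
    have ne: "factors (alt_lyndon_system A d2) m \<noteq> {}"
      using factors_ne lyndon_in_sys[OF L2] by blast
    have fin2: "finite (factors (alt_lyndon_system A d2) m)" using factors_finite[OF fA] .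
    have finx: "finite (factors (alt_lyndon_system A x) m)" using factors_finite[OF fA] .
    have fin1: "finite (factors (alt_lyndon_system A d1) m)" using factors_finite[OF fA] .
    have c2: "card (factors (alt_lyndon_system A d2) m) > 0" using ne fin2 by (simp add: card_gt_0_iff)
    have c2x: "card (factors (alt_lyndon_system A d2) m) \<le> card (factors (alt_lyndon_system A x) m)"
      using card_mono[OF finx factors_mono[OF s2]] .
    have cx1: "card (factors (alt_lyndon_system A x) m) \<le> card (factors (alt_lyndon_system A d1) m)"
      using card_mono[OF fin1 factors_mono[OF s1]] .
    have l1: "ln (real (card (factors (alt_lyndon_system A d2) m))) \<le> ln (real (card (factors (alt_lyndon_system A x) m)))"
      using c2 c2x by simp
    have l2: "ln (real (card (factors (alt_lyndon_system A x) m))) \<le> ln (real (card (factors (alt_lyndon_system A d1) m)))"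
      using c2 c2x cx1 by simp
    show ?thesis using l1 l2 by (simp add: divide_right_mono)
  qed
  have "(\<lambda>m. ?f x m) \<longlonglongrightarrow> ln \<beta>"
  proof (rule tendsto_sandwich[of "\<lambda>m. ?f d2 m" _ _ "\<lambda>m. ?f d1 m"])
    show "\<forall>\<^sub>F m in sequentially. ?f d2 m \<le> ?f x m" using bnd by simp
    show "\<forall>\<^sub>F m in sequentially. ?f x m \<le> ?f d1 m" using bnd by simp
    show "(\<lambda>m. ?f d2 m) \<longlonglongrightarrow> ln \<beta>" using a2 unfolding attached_def .
    show "(\<lambda>m. ?f d1 m) \<longlonglongrightarrow> ln \<beta>" using a1 unfolding attached_def .
  qed
  then have "attached A \<beta> x" unfolding attached_def .
  then show ?thesis using Lx Wx by blast
qed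

theorem proposition9:
  fixes A :: "int set" and \<beta> :: real
  assumes "finite A"
    and "\<beta> \<ge> 1"
    and "\<exists>d1 d2. d1 \<noteq> d2 \<and> alt_lyndon A d1 \<and> attached A \<beta> d1
                   \<and> alt_lyndon A d2 \<and> attached A \<beta> d2"
  shows "\<exists>d. alt_lyndon A d \<and> weak_word d \<and> attached A \<beta> d"
proof -
  obtain d1 d2 where h: "d1 \<noteq> d2" "alt_lyndon A d1" "attached A \<beta> d1"
    "alt_lyndon A d2" "attached A \<beta> d2" using assms(3) by blast
  from alt_total[OF h(1)] show ?thesis
    using ordered_case[OF assms(1) h(2) h(3) h(4) h(5)] ordered_case[OF assms(1) h(4) h(5) h(2) h(3)]
    by blast
qed

end
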